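(* Let $n\geq4$, $k\geq3$, and consider the single braided Coxeter group $W^n_k$ with generators $s_1,\dots,s_n$. For all $\lambda\in\mathbb{N}_0$ and $1\le r\le n$, the element represented by $\mathbf{s}=(s_1s_2\cdots s_n)^\lambda s_1\cdots s_r$ satisfies \[ l_R(\omega(\mathbf{s}))\leq \lambda(n-2)+r-2\cdot\mathbf{1}_{(\lambda+\mathbf{1}_{r\geq 2})\geq k}\cdot\left(1+\left\lfloor\frac{\lambda-k+\mathbf{1}_{r\geq2}}{k-1}\right\rfloor\right). \]
   Context: $W^n_k=\langle s_1,\dots,s_n\mid s_i^2=(s_is_j)^{k}=1\ \forall i\neq j\rangle$. $\omega$ maps a word over $\{s_1,\dots,s_n\}$ to the element it represents. $l_R$ is the reflection length: minimal number of reflections (conjugates of generators) whose product is the element. For a condition $P$, $\mathbf{1}_P$ equals $1$ if $P$ holds and $0$ otherwise. *)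

theory Defs
  imports Main
begin

text \<open>Words over the generators s_1..s_n are lists of indices in {1..n}.
  The group W^n_k is the quotient of such words by the congruence generated by
  the relators s_i s_i and (s_i s_j)^k (i \<noteq> j).\<close>

definition relator :: "nat \<Rightarrow> nat \<Rightarrow> nat list \<Rightarrow> bool" where
  "relator n k r \<longleftrightarrow>
     (\<exists>i\<in>{1..n}. r = [i, i]) \<or>
     (\<exists>i\<in>{1..n}. \<exists>j\<in>{1..n}. i \<noteq> j \<and> r = concat (replicate k [i, j]))"

text \<open>wequiv n k u v: the words u and v represent the same element of W^n_k,
  i.e. omega u = omega v.\<close>
inductive wequiv :: "nat \<Rightarrow> nat \<Rightarrow> nat list \<Rightarrow> nat list \<Rightarrow> bool" for n k where
  wrefl: "wequiv n k u u"
| wsym: "wequiv n k u v \<Longrightarrow> wequiv n k v u"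
| wtrans: "wequiv n k u v \<Longrightarrow> wequiv n k v w \<Longrightarrow> wequiv n k u w"
| wrel: "relator n k r \<Longrightarrow> wequiv n k (u @ r @ v) (u @ v)"

definition gen_word :: "nat \<Rightarrow> nat list \<Rightarrow> bool" where
  "gen_word n w \<longleftrightarrow> set w \<subseteq> {1..n}"

text \<open>A word representing a reflection, i.e. a conjugate w s_i w^{-1} of a generator
  (note w^{-1} = rev w since generators are involutions).\<close>
definition refl_word :: "nat \<Rightarrow> nat list \<Rightarrow> bool" where
  "refl_word n t \<longleftrightarrow> (\<exists>w i. gen_word n w \<and> i \<in> {1..n} \<and> t = w @ [i] @ rev w)"

definition refl_len :: "nat \<Rightarrow> nat \<Rightarrow> nat list \<Rightarrow> nat" where
  "refl_len n k w = (LEAST m. \<exists>ts. length ts = m \<and> (\<forall>t\<in>set ts. refl_word n t)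
                                 \<and> wequiv n k (concat ts) w)"

end

theory Submission
  imports Defs
begin

lemma wequiv_ctx: "wequiv n k u v \<Longrightarrow> wequiv n k (x@u@y) (x@v@y)"
proof (induction rule: wequiv.induct)
  case (wrefl u) then show ?case by (rule wequiv.wrefl)
next
  case (wsym u v) show ?case using wsym.IH by (rule wequiv.wsym)
next
  case (wtrans u v w) then show ?case by (metis wequiv.wtrans)
next
  case (wrel r u v) then show ?case using wequiv.wrel[of n k r "x@u" "v@y"] by simp
qed

lemma wequiv_app: "wequiv n k u u' \<Longrightarrow> wequiv n k v v' \<Longrightarrow> wequiv n k (u@v) (u'@v')"
  using wequiv_ctx[of n k u u' "[]" v] wequiv_ctx[of n k v v' u' "[]"]
  by (simp add: wequiv.wtrans)

lemma cancel2: "a \<in> {1..n} \<Longrightarrow> wequiv n k (x@[a,a]@y) (x@y)"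
  by (rule wequiv.wrel) (auto simp: relator_def)

lemma rev_cancel: "gen_word n g \<Longrightarrow> wequiv n k (rev g @ g) []"
proof (induction g)
  case Nil then show ?case by (simp add: wequiv.wrefl)
next
  case (Cons a g)
  have a: "a \<in> {1..n}" and g: "gen_word n g" using Cons.prems by (auto simp: gen_word_def)
  have "wequiv n k (rev g @ [a,a] @ g) (rev g @ g)" by (rule cancel2[OF a])
  then show ?case using Cons.IH[OF g] by (auto intro: wequiv.wtrans)
qed

lemma rev_cancel2: "gen_word n g \<Longrightarrow> wequiv n k (g @ rev g) []"
  using rev_cancel[of n "rev g" k] by (simp add: gen_word_def)

definition R :: "nat \<Rightarrow> nat \<Rightarrow> nat \<Rightarrow> nat list \<Rightarrow> bool" where
  "R n k m w \<longleftrightarrow> (\<exists>ts. length ts = m \<and> (\<forall>t\<in>set ts. refl_word n t) \<and> wequiv n k (concat ts) w)"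

lemma R_le: "R n k m w \<Longrightarrow> refl_len n k w \<le> m"
  unfolding refl_len_def R_def by (rule Least_le) auto

lemma R_equiv: "R n k m u \<Longrightarrow> wequiv n k u v \<Longrightarrow> R n k m v"
  unfolding R_def by (auto intro: wequiv.wtrans)

lemma R_len: "gen_word n w \<Longrightarrow> R n k (length w) w"
  unfolding R_def
proof (intro exI[of _ "map (\<lambda>i. [i]) w"] conjI)
  assume "gen_word n w"
  then show "\<forall>t\<in>set (map (\<lambda>i. [i]) w). refl_word n t"
    unfolding refl_word_def gen_word_def
    by (auto intro!: exI[of _ "[]"])
  have "concat (map (\<lambda>i. [i]) w) = w" by (induction w) auto
  then show "wequiv n k (concat (map (\<lambda>i. [i]) w)) w" by (simp add: wequiv.wrefl)
qed simp

lemma R_app: "R n k a u \<Longrightarrow> R n k b v \<Longrightarrow> R n k (a+b) (u@v)"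
  unfolding R_def
proof (elim exE conjE)
  fix ts1 ts2
  assume "length ts1 = a" "\<forall>t\<in>set ts1. refl_word n t" "wequiv n k (concat ts1) u"
     "length ts2 = b" "\<forall>t\<in>set ts2. refl_word n t" "wequiv n k (concat ts2) v"
  then show "\<exists>ts. length ts = a + b \<and> (\<forall>t\<in>set ts. refl_word n t) \<and> wequiv n k (concat ts) (u @ v)"
    by (intro exI[of _ "ts1@ts2"]) (auto intro: wequiv_app)
qed

lemma concat_conj: "gen_word n g \<Longrightarrow>
  wequiv n k (concat (map (\<lambda>t. g @ t @ rev g) ts)) (g @ concat ts @ rev g)"
proof (induction ts)
  case Nil then show ?case using rev_cancel2[of n g k] by (simp add: wequiv.wsym)
next
  case (Cons t ts)
  have "wequiv n k ((g @ t @ rev g) @ concat (map (\<lambda>t. g @ t @ rev g) ts))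
          ((g @ t @ rev g) @ (g @ concat ts @ rev g))"
    using wequiv_ctx[OF Cons.IH[OF Cons.prems], of "g @ t @ rev g" "[]"] by simp
  moreover have "wequiv n k ((g @ t) @ (rev g @ g) @ (concat ts @ rev g)) ((g @ t) @ [] @ (concat ts @ rev g))"
    by (rule wequiv_ctx[OF rev_cancel[OF Cons.prems]])
  ultimately show ?case by (auto intro: wequiv.wtrans)
qed

lemma R_conj: "R n k m u \<Longrightarrow> gen_word n g \<Longrightarrow> R n k m (g @ u @ rev g)"
  unfolding R_def
proof (elim exE conjE)
  fix ts assume h: "length ts = m" "\<forall>t\<in>set ts. refl_word n t" "wequiv n k (concat ts) u"
    and g: "gen_word n g"
  show "\<exists>ts. length ts = m \<and> (\<forall>t\<in>set ts. refl_word n t) \<and> wequiv n k (concat ts) (g @ u @ rev g)"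
  proof (intro exI[of _ "map (\<lambda>t. g @ t @ rev g) ts"] conjI)
    show "\<forall>t\<in>set (map (\<lambda>t. g @ t @ rev g) ts). refl_word n t"
    proof
      fix t' assume "t' \<in> set (map (\<lambda>t. g @ t @ rev g) ts)"
      then obtain t where t: "t \<in> set ts" "t' = g @ t @ rev g" by auto
      then obtain w i where "gen_word n w" "i \<in> {1..n}" "t = w @ [i] @ rev w"
        using h(2) unfolding refl_word_def by blast
      then show "refl_word n t'" unfolding refl_word_def using t g
        by (intro exI[of _ "g@w"] exI[of _ i]) (auto simp: gen_word_def)
    qed
    show "wequiv n k (concat (map (\<lambda>t. g @ t @ rev g) ts)) (g @ u @ rev g)"
      using concat_conj[OF g, of k ts] wequiv_ctx[OF h(3), of g "rev g"]
      by (auto intro: wequiv.wtrans)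
  qed (simp add: h)
qed

lemma R_ins1: "R n k m (x@y) \<Longrightarrow> c \<in> {1..n} \<Longrightarrow> gen_word n x \<Longrightarrow> R n k (m+1) (x@[c]@y)"
proof -
  assume h: "R n k m (x@y)" and c: "c \<in> {1..n}" and x: "gen_word n x"
  have "R n k 1 (x@[c]@rev x)" unfolding R_def refl_word_def using c x
    by (intro exI[of _ "[x@[c]@rev x]"]) (auto intro: wequiv.wrefl)
  from R_app[OF this h] have "R n k (1+m) ((x@[c]) @ (rev x @ x) @ y)" by simp
  moreover have "wequiv n k ((x@[c]) @ (rev x @ x) @ y) ((x@[c]) @ [] @ y)"
    by (rule wequiv_ctx[OF rev_cancel[OF x]])
  ultimately show ?thesis by (auto dest: R_equiv)
qed

lemma R_ins: "R n k m (x@y) \<Longrightarrow> gen_word n z \<Longrightarrow> gen_word n x \<Longrightarrow> R n k (m + length z) (x@z@y)"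
proof (induction z arbitrary: m)
  case Nil then show ?case by simp
next
  case (Cons c z)
  have "R n k (m + length z) (x@z@y)" using Cons by (auto simp: gen_word_def)
  from R_ins1[of n k "m+length z" x "z@y" c, OF this] Cons.prems
  show ?case by (auto simp: gen_word_def)
qed

definition wd :: "nat \<Rightarrow> nat \<Rightarrow> nat \<Rightarrow> nat list" where
  "wd n p l = map (\<lambda>j. (p+j) mod n + 1) [0..<l]"

lemma wd_add: "wd n p (a+b) = wd n p a @ wd n (p+a) b"
proof -
  have "[0..<a+b] = [0..<a] @ [a..<a+b]" by (rule upt_add_eq_append) simp
  moreover have "[a..<a+b] = map (\<lambda>j. j + a) [0..<b]" using map_add_upt[of a b] by (simp add: add.commute)
  moreover have "map (\<lambda>j. (p+j) mod n + 1) (map (\<lambda>j. j + a) [0..<b]) = wd n (p+a) b"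
    unfolding wd_def map_map by (rule map_cong) (simp_all add: add.assoc add.commute[of a])
  ultimately show ?thesis unfolding wd_def by simp
qed

lemma wd_shift: "wd n (p + c*n) l = wd n p l"
proof -
  have "\<And>j. (p + c*n + j) mod n = (p+j) mod n" by (metis add.assoc add.commute mod_mult_self1)
  thus ?thesis by (simp add: wd_def)
qed

lemma wd_one: "wd n p 1 = [p mod n + 1]" by (simp add: wd_def)

lemma wd_two: "wd n p 2 = [p mod n + 1, Suc p mod n + 1]" by (simp add: wd_def numeral_2_eq_2)

lemma wd_gen: "n > 0 \<Longrightarrow> gen_word n (wd n p l)"
  unfolding wd_def gen_word_def by (auto simp: Suc_le_eq)

lemma wd_len[simp]: "length (wd n p l) = l" by (simp add: wd_def)

lemma wd_rep: "wd n p (j*n) = concat (replicate j (wd n p n))"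
proof (induction j)
  case 0 then show ?case by (simp add: wd_def)
next
  case (Suc j)
  have "wd n p (Suc j * n) = wd n p n @ wd n (p+n) (j*n)" by (simp add: wd_add[symmetric])
  also have "wd n (p+n) (j*n) = wd n p (j*n)" using wd_shift[of n p 1] by simp
  finally show ?case using Suc by simp
qed

lemma wd_init: "r \<le> n \<Longrightarrow> wd n 0 r = [1..<r+1]"
proof -
  assume r: "r \<le> n"
  have "wd n 0 r = map Suc [0..<r]" unfolding wd_def by (rule map_cong) (use r in auto)
  thus ?thesis by (simp add: map_Suc_upt)
qed

definition Eb :: "nat \<Rightarrow> nat \<Rightarrow> nat \<Rightarrow> int" where
  "Eb k lam r = (let e = (if r \<ge> 2 then 1 else 0) :: int in
               (if int lam + e \<ge> int k then 1 else 0)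
               * (1 + (int lam - int k + e) div (int k - 1)))"

lemma E0: "k \<ge> 3 \<Longrightarrow> Eb k 0 r = 0" by (simp add: Eb_def Let_def)

lemma Enonneg: "k \<ge> 3 \<Longrightarrow> Eb k lam r \<ge> 0"
  by (simp add: Eb_def Let_def pos_imp_zdiv_nonneg_iff)

lemma E1: "k \<ge> 3 \<Longrightarrow> lam \<ge> 1 \<Longrightarrow> r' \<ge> 2 \<Longrightarrow> Eb k lam 1 = Eb k (lam-1) r'"
proof -
  assume a: "k \<ge> 3" "lam \<ge> 1" "r' \<ge> 2"
  have i: "int (lam - 1) = int lam - 1" using a by (simp add: of_nat_diff)
  show ?thesis unfolding Eb_def Let_def i using a by simp
qed

lemma Esmall: "lam + 1 < k \<Longrightarrow> Eb k lam r = 0"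
  by (simp add: Eb_def Let_def)

lemma Egroup: assumes "k \<ge> 3" "lam + 1 \<ge> k" "r \<ge> 2" "r' \<ge> 2"
  shows "Eb k lam r = 1 + Eb k (lam-(k-1)) r'"
proof -
  define x where "x = int lam - int k + 1"
  have x0: "x \<ge> 0" using assms by (simp add: x_def)
  have L: "Eb k lam r = 1 + x div (int k - 1)" using assms by (simp add: Eb_def Let_def x_def)
  have il: "int (lam-(k-1)) = x"
    using assms by (simp add: x_def of_nat_diff)
  have R: "Eb k (lam-(k-1)) r' = (if x + 1 \<ge> int k then 1 else 0) * (1 + (x - int k + 1) div (int k - 1))"
    unfolding Eb_def Let_def il using assms by simp
  have h: "x - int k + 1 = x - (int k - 1)" by simp
  show ?thesis
  proof (cases "x \<ge> int k - 1")
    case True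
    have "(x - (int k - 1)) div (int k - 1) = x div (int k - 1) - 1"
      using assms div_add_self2[of "int k - 1" "x - (int k - 1)"] by simp
    moreover have "x + 1 \<ge> int k" using True by simp
    ultimately show ?thesis unfolding R L h by simp
  next
    case False
    have "x div (int k - 1) = 0" using False x0 by (simp add: div_pos_pos_trivial)
    moreover have "\<not> x + 1 \<ge> int k" using False by simp
    ultimately show ?thesis unfolding R L by simp
  qed
qed


lemma R_rep: "R n k m (pre @ concat (replicate j [a,b]) @ tail) \<Longrightarrow> gen_word n pre \<Longrightarrow>
   gen_word n [a,b] \<Longrightarrow> gen_word n C \<Longrightarrow>
   R n k (m + j * length C) (pre @ concat (replicate j ([a,b] @ C)) @ tail)"
proof (induction j arbitrary: pre m)
  case 0 then show ?case by simp
next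
  case (Suc j)
  have "R n k (m + j * length C) ((pre @ [a,b]) @ concat (replicate j ([a,b] @ C)) @ tail)"
    using Suc.IH[of m "pre @ [a,b]"] Suc.prems by (simp add: gen_word_def)
  from R_ins[of n k "m + j * length C" "pre @ [a,b]" "concat (replicate j ([a,b] @ C)) @ tail" C, OF this]
  show ?case using Suc.prems by (simp add: gen_word_def add.commute add.left_commute)
qed

definition Tb :: "nat \<Rightarrow> nat \<Rightarrow> nat \<Rightarrow> nat \<Rightarrow> int" where
  "Tb n k lam r = int lam * (int n - 2) + int r - 2 * Eb k lam r"

lemma main:
  assumes n: "n \<ge> 4" and k: "k \<ge> 3"
  shows "1 \<le> r \<Longrightarrow> r \<le> n \<Longrightarrow> \<exists>m. R n k m (wd n p (lam*n + r)) \<and> int m \<le> Tb n k lam r"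
proof (induction lam arbitrary: p r rule: less_induct)
  case (less lam)
  have n0: "n > 0" using n by simp
  show ?case
  proof (cases "lam = 0")
    case True
    then show ?thesis using R_len[OF wd_gen[OF n0], of k p r] E0[OF k] n
      by (intro exI[of _ r]) (simp add: Tb_def)
  next
    case False
    define a where "a = p mod n + 1"
    have a: "a \<in> {1..n}" using n0 by (simp add: a_def Suc_le_eq)
    show ?thesis
    proof (cases "r = 1 \<or> lam + 1 < k")
      case True
      obtain l where l: "lam = Suc l" using False by (cases lam) auto
      define X where "X = wd n (p+1) (l*n + (n-1))"
      define Y where "Y = wd n (p+1) (r-1)"
      have split: "wd n p (lam*n+r) = [a] @ X @ [a] @ Y"
      proof -
        define A where "A = l*n + (n-1)"
        define B where "B = r - 1"
        have e: "lam*n + r = 1 + A + 1 + B" using l less.prems n by (simp add: A_def B_def)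
        have q1: "p + (1 + A) = p + lam*n" using l n by (simp add: A_def)
        have q2: "p + (1 + A + 1) = (p+1) + lam*n" using l n by (simp add: A_def)
        have h1: "wd n (p + (1 + A)) 1 = [a]" by (subst q1, subst wd_shift, unfold a_def, rule wd_one)
        have h2: "wd n (p + (1 + A + 1)) B = Y" by (subst q2, subst wd_shift, simp add: Y_def B_def)
        have h0: "wd n p 1 = [a]" unfolding a_def by (rule wd_one)
        have "wd n p (lam*n+r) = wd n p 1 @ wd n (p+1) A @ wd n (p + (1 + A)) 1
                 @ wd n (p + (1 + A + 1)) B"
          by (simp only: e wd_add append_assoc)
        then show ?thesis unfolding h0 h1 h2 unfolding X_def A_def .
      qed
      have "\<exists>m. R n k m X \<and> int m \<le> Tb n k l (n-1)"
        using less.IH[of l "n-1" "p+1"] l n unfolding X_def by simp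
      then obtain m1 where m1: "R n k m1 X" "int m1 \<le> Tb n k l (n-1)" by blast
      have "R n k m1 ([a] @ X @ rev [a])" by (rule R_conj[OF m1(1)]) (use a in \<open>simp add: gen_word_def\<close>)
      from R_app[OF this R_len[OF wd_gen[OF n0], of k "p+1" "r-1"]]
      have RR: "R n k (m1 + (r-1)) (wd n p (lam*n+r))" unfolding split Y_def by simp
      have "Eb k lam r \<le> Eb k l (n-1)"
      proof (cases "r = 1")
        case True then show ?thesis using E1[OF k, of lam "n-1"] l n by simp
      next
        case False then show ?thesis using True Esmall[of lam k r] Enonneg[OF k, of l "n-1"] by simp
      qed
      moreover have "int lam * (int n - 2) = int l * (int n - 2) + int n - 2" using l by (simp add: algebra_simps)
      ultimately have "int (m1 + (r-1)) \<le> Tb n k lam r" using m1(2) less.prems n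
        by (simp add: Tb_def of_nat_diff)
      then show ?thesis using RR by blast
    next
      case False2: False
      then have r2: "r \<ge> 2" and lk: "lam + 1 \<ge> k" using less.prems by auto
      obtain k2 where k2: "k = Suc (Suc k2)" using k by (cases k; cases "k-1") auto
      obtain d where d: "lam = Suc (d + k2)" using lk k2 by (metis add.commute add_Suc_right le_Suc_ex le_add_diff_inverse2 Suc_le_mono plus_1_eq_Suc)
      define b where "b = Suc p mod n + 1"
      have b: "b \<in> {1..n}" using n0 by (simp add: b_def Suc_le_eq)
      have ab: "a \<noteq> b" using n by (auto simp: a_def b_def mod_Suc)
      have gab: "gen_word n [a,b]" using a b by (simp add: gen_word_def)
      define X where "X = wd n (p+2) (d*n + (n-2))"
      define C where "C = wd n (p+2) (n-2)"
      define D where "D = wd n (p+2) (r-2)"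
      have w2: "wd n p 2 = [a,b]" by (simp add: wd_two a_def b_def)
      have wn: "wd n p n = [a,b] @ C"
      proof -
        have "wd n p (2 + (n-2)) = [a,b] @ C" by (simp only: wd_add w2 C_def)
        moreover have "2 + (n-2) = n" using n by simp
        ultimately show ?thesis by simp
      qed
      have wr: "wd n p r = [a,b] @ D"
      proof -
        have "wd n p (2 + (r-2)) = [a,b] @ D" by (simp only: wd_add w2 D_def)
        moreover have "2 + (r-2) = r" using r2 by simp
        ultimately show ?thesis by simp
      qed
      have split: "wd n p (lam*n+r) = [a,b] @ X @ (concat (replicate k2 ([a,b] @ C)) @ [a,b] @ D)"
      proof -
        have "lam*n = d*n + n + k2*n" using d by (simp add: algebra_simps)
        then have e: "lam*n + r = 2 + (d*n + (n-2)) + (k2*n + r)" using n by arith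
        define A where "A = d*n + (n-2)"
        define B where "B = k2*n + r"
        have "wd n p (lam*n+r) = wd n p 2 @ wd n (p+2) A @ wd n (p+(2+A)) B"
          by (simp only: e[folded A_def B_def] wd_add append_assoc)
        moreover have q: "p+(2+A) = p + Suc d * n" using n by (simp add: A_def)
        moreover have "wd n (p+(2+A)) B = wd n p B" by (subst q, rule wd_shift)
        ultimately have "wd n p (lam*n+r) = [a,b] @ X @ wd n p (k2*n + r)"
          using w2 by (simp only: X_def A_def B_def)
        moreover have "wd n p (k2*n + r) = concat (replicate k2 (wd n p n)) @ wd n p r"
          using wd_add[of n p "k2*n" r] wd_rep[of n p k2] wd_shift[of n p k2 r] by simp
        ultimately show ?thesis using wn wr by simp
      qed
      have "\<exists>m. R n k m X \<and> int m \<le> Tb n k d (n-2)"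
        using less.IH[of d "n-2" "p+2"] d n unfolding X_def by simp
      then obtain m1 where m1: "R n k m1 X" "int m1 \<le> Tb n k d (n-2)" by blast
      have RX: "R n k m1 ([a,b] @ X @ [b,a])" using R_conj[OF m1(1) gab] by simp
      have R0: "R n k 0 (concat (replicate k [a,b]))"
      proof -
        have "relator n k (concat (replicate k [a,b]))" unfolding relator_def using a b ab by blast
        from wequiv.wrel[OF this, of "[]" "[]"] have "wequiv n k (concat (replicate k [a,b])) []" by simp
        then show ?thesis unfolding R_def by (auto intro: wequiv.wsym)
      qed
      have ck: "concat (replicate k [a,b]) = [a,b] @ concat (replicate k2 [a,b]) @ [a,b]"
        unfolding k2 by (simp add: replicate_append_same[symmetric])
      have gC: "gen_word n C" "gen_word n D" unfolding C_def D_def using wd_gen[OF n0] by auto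
      have "R n k (0 + length D) (([a,b] @ concat (replicate k2 [a,b]) @ [a,b]) @ D @ [])"
        by (rule R_ins) (use R0 ck gC gab in \<open>auto simp: gen_word_def\<close>)
      then have "R n k (length D + k2 * length C) ([a,b] @ concat (replicate k2 ([a,b] @ C)) @ ([a,b] @ D))"
        using R_rep[of n k "length D" "[a,b]" k2 a b "[a,b] @ D" C] gab gC by simp
      from R_app[OF RX this]
      have "R n k (m1 + (length D + k2 * length C))
             (([a,b] @ X @ [b]) @ [a,a] @ ([b] @ concat (replicate k2 ([a,b] @ C)) @ [a,b] @ D))"
        by simp
      then have "R n k (m1 + (length D + k2 * length C))
             (([a,b] @ X) @ [b,b] @ (concat (replicate k2 ([a,b] @ C)) @ [a,b] @ D))"
        using R_equiv cancel2[OF a] by fastforce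
      then have RR: "R n k (m1 + (length D + k2 * length C)) (wd n p (lam*n+r))"
        unfolding split using R_equiv cancel2[OF b] by fastforce
      have E: "Eb k lam r = 1 + Eb k d (n-2)"
        using Egroup[OF k lk r2, of "n-2"] n d k2 by simp
      have "int lam * (int n - 2) = int d * (int n - 2) + (int n - 2) + int k2 * (int n - 2)"
        using d by (simp add: algebra_simps)
      then have "int (m1 + (length D + k2 * length C)) \<le> Tb n k lam r"
        using m1(2) E n r2 by (simp add: Tb_def of_nat_diff C_def D_def)
      then show ?thesis using RR by blast
    qed
  qed
qed

lemma w: "n \<ge> 4 \<Longrightarrow> r \<le> n \<Longrightarrow> concat (replicate lam [1..<n+1]) @ [1..<r+1] = wd n 0 (lam*n + r)"
proof -
  assume a: "n \<ge> 4" "r \<le> n"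
  have "wd n 0 (lam*n + r) = wd n 0 (lam*n) @ wd n (0 + lam*n) r" by (rule wd_add)
  also have "wd n (0 + lam*n) r = wd n 0 r" by (rule wd_shift)
  also have "wd n 0 (lam*n) = concat (replicate lam (wd n 0 n))" by (rule wd_rep)
  finally show ?thesis using wd_init[of n n] wd_init[of r n] a by simp
qed

theorem mainTheorem14:
  fixes n k lam r :: nat
  assumes "n \<ge> 4" and "k \<ge> 3" and "1 \<le> r" and "r \<le> n"
  shows "int (refl_len n k (concat (replicate lam [1..<n+1]) @ [1..<r+1]))
     \<le> int lam * (int n - 2) + int r
        - 2 * (let e = (if r \<ge> 2 then 1 else 0) :: int in
               (if int lam + e \<ge> int k then 1 else 0)
               * (1 + (int lam - int k + e) div (int k - 1)))"
proof -
  obtain m where m: "R n k m (wd n 0 (lam*n + r))" "int m \<le> Tb n k lam r"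
    using main[OF assms(1,2) assms(3,4), of 0 lam] by blast
  have "refl_len n k (wd n 0 (lam*n + r)) \<le> m" by (rule R_le[OF m(1)])
  then have "int (refl_len n k (concat (replicate lam [1..<n+1]) @ [1..<r+1])) \<le> Tb n k lam r"
    using m(2) w[OF assms(1,4)] by simp
  then show ?thesis by (simp only: Tb_def Eb_def)
qed
end
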